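(* Let $0<p_0<1$, $0<\beta\le1$, $0\le\alpha\le1$ with $\alpha\le\beta$, $\epsilon>0$, $\omega\ge0$, $\gamma_0\ge\gamma\ge0$. Let $\omega(t),\epsilon_x(t),\epsilon_y(t),\delta\gamma_t$ be real-valued functions of time with $|\omega(t)|\le\omega$, $\sqrt{\epsilon_x^2(t)+\epsilon_y^2(t)}\le\epsilon$, $|\delta\gamma_t|\le\gamma$, and set $H(t)=[1+\omega(t)]I_z+\epsilon_x(t)I_x+\epsilon_y(t)I_y$, $\gamma_t=\gamma_0+\delta\gamma_t$. Let the qubit density matrix $\rho_t$ evolve according to $$\dot\rho_t=-i[H(t),\rho_t]+\gamma_t\Big(\sigma_-\rho_t\sigma_+-\tfrac12\sigma_+\sigma_-\rho_t-\tfrac12\rho_t\sigma_+\sigma_-\Big)$$ from an initial state $\rho_0$ with $\langle1|\rho_0|1\rangle\le\alpha p_0$. Let $$T_a=\frac{2p_0}{\sqrt{4\epsilon^2+(\gamma_0+\gamma)^2}+(\gamma_0+\gamma)}.$$ Then for every $t\in[0,(1-\beta)T_a]$, $\rho_t\in\mathcal{D}_a=\{\rho:\langle0|\rho|0\rangle\ge1-p_0\}$; equivalently, a projective measurement of $\sigma_z$ at time $t$ has probability of failure $p=\langle1|\rho_t|1\rangle\le p_0$.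
   Context: $\sigma_x,\sigma_y,\sigma_z$ are the Pauli matrices $\begin{pmatrix}0&1\\1&0\end{pmatrix},\begin{pmatrix}0&-i\\i&0\end{pmatrix},\begin{pmatrix}1&0\\0&-1\end{pmatrix}$, $I_j=\frac12\sigma_j$, $\sigma_-=\frac12(\sigma_x-i\sigma_y)$, $\sigma_+=\frac12(\sigma_x+i\sigma_y)$, $[A,B]=AB-BA$. $|0\rangle=(1,0)^T$, $|1\rangle=(0,1)^T$ are the eigenvectors of $\sigma_z$ with eigenvalues $1,-1$. Units with $\hbar=1$. The probability of failure is the probability that a $\sigma_z$ measurement yields $|1\rangle$. *)

theory Defs
  imports "HOL-Analysis.Analysis"
begin

type_synonym cmat2 = "complex^2^2"

text \<open>Basis convention: index 1 corresponds to |0>, index 2 corresponds to |1>.\<close>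

definition mat2 :: "complex \<Rightarrow> complex \<Rightarrow> complex \<Rightarrow> complex \<Rightarrow> cmat2" where
  "mat2 a b c d = (\<chi> i j. if i = 1 then (if j = 1 then a else b) else (if j = 1 then c else d))"

definition sigma_x :: cmat2 where "sigma_x = mat2 0 1 1 0"
definition sigma_y :: cmat2 where "sigma_y = mat2 0 (-\<i>) \<i> 0"
definition sigma_z :: cmat2 where "sigma_z = mat2 1 0 0 (-1)"

definition I_x :: cmat2 where "I_x = (1/2::real) *\<^sub>R sigma_x"
definition I_y :: cmat2 where "I_y = (1/2::real) *\<^sub>R sigma_y"
definition I_z :: cmat2 where "I_z = (1/2::real) *\<^sub>R sigma_z"

definition csmul :: "complex \<Rightarrow> cmat2 \<Rightarrow> cmat2" where
  "csmul c A = (\<chi> i j. c * A $ i $ j)"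

definition sigma_minus :: cmat2 where "sigma_minus = csmul (1/2) (sigma_x - csmul \<i> sigma_y)"
definition sigma_plus :: cmat2 where "sigma_plus = csmul (1/2) (sigma_x + csmul \<i> sigma_y)"

definition commutator :: "cmat2 \<Rightarrow> cmat2 \<Rightarrow> cmat2" where
  "commutator A B = A ** B - B ** A"

definition lindblad_rhs :: "cmat2 \<Rightarrow> real \<Rightarrow> cmat2 \<Rightarrow> cmat2" where
  "lindblad_rhs H g \<rho> =
     csmul (-\<i>) (commutator H \<rho>)
     + g *\<^sub>R (sigma_minus ** \<rho> ** sigma_plus
               - (1/2::real) *\<^sub>R (sigma_plus ** sigma_minus ** \<rho>)
               - (1/2::real) *\<^sub>R (\<rho> ** sigma_plus ** sigma_minus))"

text \<open>Qubit density matrix: positive semidefinite (hence Hermitian) with unit trace.\<close>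
definition density_matrix :: "cmat2 \<Rightarrow> bool" where
  "density_matrix \<rho> \<longleftrightarrow>
     (\<forall>v :: complex^2. let q = (\<Sum>i\<in>UNIV. \<Sum>j\<in>UNIV. cnj (v $ i) * \<rho> $ i $ j * v $ j)
                       in Im q = 0 \<and> Re q \<ge> 0)
     \<and> (\<Sum>i\<in>UNIV. \<rho> $ i $ i) = 1"

definition elem00 :: "cmat2 \<Rightarrow> complex" where "elem00 \<rho> = \<rho> $ 1 $ 1"
definition elem11 :: "cmat2 \<Rightarrow> complex" where "elem11 \<rho> = \<rho> $ 2 $ 2"

definition D_a :: "real \<Rightarrow> cmat2 set" where
  "D_a p0 = {\<rho>. Re (elem00 \<rho>) \<ge> 1 - p0}"

definition T_a :: "real \<Rightarrow> real \<Rightarrow> real \<Rightarrow> real \<Rightarrow> real" where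
  "T_a p0 \<epsilon> \<gamma>0 \<gamma> = 2 * p0 / (sqrt (4 * \<epsilon>^2 + (\<gamma>0 + \<gamma>)^2) + (\<gamma>0 + \<gamma>))"

end

theory Submission imports Defs begin
lemma qform: "(\<Sum>i\<in>UNIV. \<Sum>j\<in>UNIV. cnj ((\<chi> k. if k = 1 then x else y :: complex^2) $ i) * r $ i $ j * (\<chi> k. if k = 1 then x else y :: complex^2) $ j)
   = cnj x * r$1$1 * x + cnj x * r$1$2 * y + cnj y * r$2$1 * x + cnj y * r$2$2 * y"
  by (simp add: sum_2)

lemma dm_facts:
  assumes "density_matrix r"
  shows "Im (r$1$1) = 0" "Re (r$1$1) \<ge> 0" "Im (r$2$2) = 0" "Re (r$2$2) \<ge> 0"
    "r$2$1 = cnj (r$1$2)" "Re (r$1$1) + Re (r$2$2) = 1"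
    "(cmod (r$1$2))^2 \<le> Re (r$1$1) * Re (r$2$2)"
proof -
  have Q: "Im (cnj x * r$1$1 * x + cnj x * r$1$2 * y + cnj y * r$2$1 * x + cnj y * r$2$2 * y) = 0 \<and>
           Re (cnj x * r$1$1 * x + cnj x * r$1$2 * y + cnj y * r$2$1 * x + cnj y * r$2$2 * y) \<ge> 0" for x y
    using assms[unfolded density_matrix_def Let_def, THEN conjunct1, rule_format, of "\<chi> k. if k = 1 then x else y"]
    unfolding qform .
  have tr: "r$1$1 + r$2$2 = 1" using assms unfolding density_matrix_def by (simp add: sum_2)
  from Q[of 1 0] show a1: "Im (r$1$1) = 0" "Re (r$1$1) \<ge> 0" by simp_all
  from Q[of 0 1] show a2: "Im (r$2$2) = 0" "Re (r$2$2) \<ge> 0" by simp_all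
  from tr show "Re (r$1$1) + Re (r$2$2) = 1" by (metis one_complex.simps(1) plus_complex.simps(1))
  have "Im (r$1$2 + r$2$1) = 0" using Q[of 1 1] a1 a2 by simp
  moreover have "Re (r$1$2) - Re (r$2$1) = 0" using Q[of 1 \<i>] a1 a2 by simp
  ultimately show c: "r$2$1 = cnj (r$1$2)" by (simp add: complex_eq_iff)
  define a where "a = Re (r$1$1)"
  define d where "d = Re (r$2$2)"
  define B where "B = (cmod (r$1$2))^2"
  have key: "a - 2*t*B + d*t^2*B \<ge> 0" for t
  proof -
    have "Re (cnj 1 * r$1$1 * 1 + cnj 1 * r$1$2 * (-t * cnj (r$1$2)) + cnj (-t * cnj (r$1$2)) * r$2$1 * 1
        + cnj (-t * cnj (r$1$2)) * r$2$2 * (-t * cnj (r$1$2))) = a - 2*t*B + d*t^2*B"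
    proof -
      obtain b1 b2 where b: "r$1$2 = Complex b1 b2" by (metis complex.exhaust_sel)
      have r11: "r$1$1 = Complex a 0" using a1 unfolding a_def by (simp add: complex_eq_iff)
      have r22: "r$2$2 = Complex d 0" using a2 unfolding d_def by (simp add: complex_eq_iff)
      have BB: "B = b1^2 + b2^2" unfolding B_def b by (simp add: cmod_def)
      show ?thesis unfolding c r11 r22 b BB by (simp add: power2_eq_square algebra_simps)
    qed
    thus ?thesis using Q[of 1 "-t * cnj (r$1$2)"] by simp
  qed
  have "B \<le> a * d"
  proof (cases "d > 0")
    case True
    have "a - 2*(1/d)*B + d*(1/d)^2*B \<ge> 0" by (rule key)
    hence "a - B/d \<ge> 0" using True by (simp add: power2_eq_square field_simps)
    thus ?thesis using True by (simp add: field_simps)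
  next
    case False
    hence d0: "d = 0" using a2 d_def by simp
    have "B \<ge> 0" unfolding B_def by simp
    show ?thesis
    proof (cases "B = 0")
      case True thus ?thesis using d0 by simp
    next
      case False
      have "a - 2*((a+1)/(2*B))*B + d*((a+1)/(2*B))^2*B \<ge> 0" by (rule key)
      hence "a - (a+1) \<ge> 0" using False d0 by simp
      thus ?thesis by simp
    qed
  qed
  thus "(cmod (r$1$2))^2 \<le> Re (r$1$1) * Re (r$2$2)" unfolding a_def d_def B_def .
qed

lemma mat2_nth: "mat2 a b c d $ 1 $ 1 = a" "mat2 a b c d $ 1 $ 2 = b" "mat2 a b c d $ 2 $ 1 = c" "mat2 a b c d $ 2 $ 2 = d"
  by (simp_all add: mat2_def)

lemma entry22:
  fixes w ex ey g :: real and r :: cmat2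
  shows "lindblad_rhs ((1 + w) *\<^sub>R I_z + ex *\<^sub>R I_x + ey *\<^sub>R I_y) g r $ 2 $ 2
       = -\<i> * ((complex_of_real ex + \<i> * ey)/2 * r$1$2 - r$2$1 * (complex_of_real ex - \<i> * ey)/2) + g * r$1$1"
  apply (simp add: lindblad_rhs_def commutator_def matrix_matrix_mult_def sum_2 csmul_def
     sigma_minus_def sigma_plus_def sigma_x_def sigma_y_def sigma_z_def I_x_def I_y_def I_z_def mat2_nth
     vector_scaleR_component)
  apply (simp add: algebra_simps scaleR_conv_of_real add_divide_distrib diff_divide_distrib)
  done

lemma ham_bound:
  fixes ex ey e :: real and b :: complex
  assumes "sqrt (ex^2 + ey^2) \<le> e"
  shows "Re (-\<i> * ((complex_of_real ex + \<i> * ey)/2 * b - cnj b * (complex_of_real ex - \<i> * ey)/2)) \<le> e * cmod b"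
proof -
  define h where "h = (complex_of_real ex + \<i> * ey)/2"
  have eq: "Re (-\<i> * ((complex_of_real ex + \<i> * ey)/2 * b - cnj b * (complex_of_real ex - \<i> * ey)/2))
      = 2 * Re (-\<i> * h * b)"
    unfolding h_def by (simp add: field_simps)
  have "Re (-\<i> * h * b) \<le> cmod (-\<i> * h * b)" by (rule complex_Re_le_cmod)
  also have "\<dots> = cmod h * cmod b" by (simp add: norm_mult)
  also have "cmod h = sqrt (ex^2 + ey^2) / 2"
  proof -
    have "h = Complex (ex/2) (ey/2)" unfolding h_def by (simp add: complex_eq_iff)
    hence "cmod h = sqrt ((ex/2)^2 + (ey/2)^2)" by (simp add: cmod_def)
    also have "(ex/2)^2 + (ey/2)^2 = (ex^2+ey^2)/2^2" by (simp add: power_divide)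
    finally show ?thesis by (simp add: real_sqrt_divide)
  qed
  finally have "Re (-\<i> * h * b) \<le> sqrt (ex^2 + ey^2) / 2 * cmod b" .
  also have "\<dots> \<le> e / 2 * cmod b" using assms by (intro mult_right_mono) auto
  finally show ?thesis using eq by simp
qed

lemma scalar_bound:
  fixes a d sb g gt eps :: real
  assumes "a \<ge> 0" "d \<ge> 0" "a + d = 1" "sb \<ge> 0" "sb^2 \<le> a * d" "0 \<le> gt" "gt \<le> g" "eps \<ge> 0"
  shows "gt * a + eps * sb \<le> (g + sqrt (g^2 + 4*eps^2)) / 2"
proof -
  define x where "x = a - 1/2"
  have "(g*x + eps * sb)^2 \<le> (g^2+4*eps^2) * (x^2 + sb^2/4)"
  proof -
    have "(g^2+4*eps^2) * (x^2 + sb^2/4) - (g*x + eps * sb)^2 = (g * sb/2 - 2*eps*x)^2"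
      by (simp add: power2_eq_square algebra_simps)
    thus ?thesis by (smt (verit) zero_le_power2)
  qed
  also have "x^2 + sb^2/4 \<le> 1/4"
  proof -
    have "d = 1 - a" using assms by simp
    hence "sb^2 \<le> a*(1-a)" using assms(5) by simp
    moreover have "a*(1-a) = 1/4 - x^2" unfolding x_def by (simp add: power2_eq_square algebra_simps)
    ultimately show ?thesis using zero_le_power2[of sb] by linarith
  qed
  hence "(g^2+4*eps^2) * (x^2 + sb^2/4) \<le> (g^2+4*eps^2) * (1/4)"
    by (intro mult_left_mono) auto
  also have "\<dots> = (sqrt (g^2 + 4*eps^2) / 2)^2" by (simp add: power_divide)
  finally have "g*x + eps * sb \<le> sqrt (g^2 + 4*eps^2) / 2"
    by (rule power2_le_imp_le) simp
  moreover have "gt * a \<le> g * a" using assms by (intro mult_right_mono) auto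
  ultimately show ?thesis unfolding x_def by (simp add: algebra_simps)
qed

theorem theorem3:
  fixes p0 \<beta> \<alpha> \<epsilon> \<omega> \<gamma>0 \<gamma> :: real
    and w \<epsilon>x \<epsilon>y \<delta>\<gamma> :: "real \<Rightarrow> real"
    and \<rho> :: "real \<Rightarrow> complex^2^2"
  assumes "0 < p0" "p0 < 1"
    and "0 < \<beta>" "\<beta> \<le> 1"
    and "0 \<le> \<alpha>" "\<alpha> \<le> 1" "\<alpha> \<le> \<beta>"
    and "\<epsilon> > 0" "\<omega> \<ge> 0" "\<gamma>0 \<ge> \<gamma>" "\<gamma> \<ge> 0"
    and "\<And>t. \<bar>w t\<bar> \<le> \<omega>"
    and "\<And>t. sqrt ((\<epsilon>x t)^2 + (\<epsilon>y t)^2) \<le> \<epsilon>"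
    and "\<And>t. \<bar>\<delta>\<gamma> t\<bar> \<le> \<gamma>"
    and "\<And>t. t \<ge> 0 \<Longrightarrow> density_matrix (\<rho> t)"
    and "\<And>t. t \<ge> 0 \<Longrightarrow>
           (\<rho> has_vector_derivative
              lindblad_rhs ((1 + w t) *\<^sub>R I_z + \<epsilon>x t *\<^sub>R I_x + \<epsilon>y t *\<^sub>R I_y)
                           (\<gamma>0 + \<delta>\<gamma> t) (\<rho> t))
           (at t within {0..})"
    and "Re (elem11 (\<rho> 0)) \<le> \<alpha> * p0"
  shows "\<forall>t \<in> {0 .. (1 - \<beta>) * T_a p0 \<epsilon> \<gamma>0 \<gamma>}.
           \<rho> t \<in> D_a p0 \<and> Re (elem11 (\<rho> t)) \<le> p0"
  proof -
  note A = assms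
  define g where "g = \<gamma>0 + \<gamma>"
  define S where "S = sqrt (4 * \<epsilon>^2 + g^2)"
  define M where "M = (g + S) / 2"
  have g0: "g \<ge> 0" using A unfolding g_def by simp
  have "S > 0" unfolding S_def using A by (intro real_sqrt_gt_zero) (simp add: add_pos_nonneg)
  hence M0: "M > 0" unfolding M_def using g0 by simp
  have Ta: "T_a p0 \<epsilon> \<gamma>0 \<gamma> = p0 / M"
    unfolding T_a_def M_def S_def g_def by (simp add: field_simps)
  define f where "f t = Re (\<rho> t $ 2 $ 2)" for t
  define D where "D t = lindblad_rhs ((1 + w t) *\<^sub>R I_z + \<epsilon>x t *\<^sub>R I_x + \<epsilon>y t *\<^sub>R I_y)
                           (\<gamma>0 + \<delta>\<gamma> t) (\<rho> t)" for t
  have L: "bounded_linear (\<lambda>A::cmat2. Re (A $ 2 $ 2))"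
    by (intro bounded_linear_compose[OF bounded_linear_Re] bounded_linear_compose[OF bounded_linear_vec_nth]
        bounded_linear_vec_nth)
  have fd: "(f has_derivative (\<lambda>h. h * Re (D t $ 2 $ 2))) (at t within {0..})" if "t \<ge> 0" for t
  proof -
    have "(\<rho> has_derivative (\<lambda>h. h *\<^sub>R D t)) (at t within {0..})"
      using A(16)[OF that] unfolding has_vector_derivative_def D_def .
    from bounded_linear.has_derivative[OF L this]
    show ?thesis unfolding f_def by simp
  qed
  have Dbound: "Re (D t $ 2 $ 2) \<le> M" if "t \<ge> 0" for t
  proof -
    note dm = dm_facts[OF A(15)[OF that]]
    have e22: "D t $ 2 $ 2 = -\<i> * ((complex_of_real (\<epsilon>x t) + \<i> * \<epsilon>y t)/2 * \<rho> t$1$2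
        - cnj (\<rho> t$1$2) * (complex_of_real (\<epsilon>x t) - \<i> * \<epsilon>y t)/2) + (\<gamma>0 + \<delta>\<gamma> t) * \<rho> t$1$1"
      unfolding D_def entry22 dm(5) by simp
    have h: "Re (-\<i> * ((complex_of_real (\<epsilon>x t) + \<i> * \<epsilon>y t)/2 * \<rho> t$1$2
        - cnj (\<rho> t$1$2) * (complex_of_real (\<epsilon>x t) - \<i> * \<epsilon>y t)/2)) \<le> \<epsilon> * cmod (\<rho> t$1$2)"
      by (rule ham_bound[OF A(13)])
    have gt: "0 \<le> \<gamma>0 + \<delta>\<gamma> t" "\<gamma>0 + \<delta>\<gamma> t \<le> g"
      using A(14)[of t] A(10) unfolding g_def by auto
    have re2: "Re ((\<gamma>0 + \<delta>\<gamma> t) * \<rho> t$1$1) = (\<gamma>0 + \<delta>\<gamma> t) * Re (\<rho> t$1$1)"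
      by simp
    have sb: "(\<gamma>0 + \<delta>\<gamma> t) * Re (\<rho> t$1$1) + \<epsilon> * cmod (\<rho> t$1$2) \<le> (g + sqrt (g^2 + 4*\<epsilon>^2)) / 2"
      by (rule scalar_bound[OF dm(2) dm(4) dm(6) _ dm(7) gt]) (use A in auto)
    have "Re (D t $ 2 $ 2) \<le> \<epsilon> * cmod (\<rho> t$1$2) + (\<gamma>0 + \<delta>\<gamma> t) * Re (\<rho> t$1$1)"
      unfolding e22 using h re2 by (simp only: plus_complex.sel)
    also have "\<dots> \<le> M" using sb unfolding M_def S_def by (simp add: add.commute)
    finally show ?thesis .
  qed
  show ?thesis
  proof
    fix t assume t: "t \<in> {0 .. (1 - \<beta>) * T_a p0 \<epsilon> \<gamma>0 \<gamma>}"
    hence t0: "0 \<le> t" and tle: "t \<le> (1 - \<beta>) * (p0 / M)" using Ta by auto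
    have "\<exists>x\<in>{0..t}. f t - f 0 = (\<lambda>h. h * Re (D x $ 2 $ 2)) (t - 0)"
      by (rule mvt_very_simple[OF t0]) (rule has_derivative_subset[OF fd], auto)
    then obtain x where x: "x \<in> {0..t}" and mv: "f t - f 0 = (t - 0) * Re (D x $ 2 $ 2)" by auto
    have "(t - 0) * Re (D x $ 2 $ 2) \<le> t * M" using Dbound[of x] x t0 by (simp add: mult_left_mono)
    also have "t * M \<le> (1 - \<beta>) * (p0 / M) * M" using tle M0 by (intro mult_right_mono) auto
    also have "\<dots> = (1 - \<beta>) * p0" using M0 by simp
    finally have "f t \<le> f 0 + (1 - \<beta>) * p0" using mv by simp
    moreover have "f 0 \<le> \<beta> * p0" using A(17) A(7) A(1) unfolding f_def elem11_def
      by (smt (verit) mult_right_mono)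
    ultimately have "f t \<le> p0" by (simp add: algebra_simps)
    moreover have "Re (\<rho> t $ 1 $ 1) + f t = 1" using dm_facts(6)[OF A(15)[OF t0]] unfolding f_def .
    ultimately show "\<rho> t \<in> D_a p0 \<and> Re (elem11 (\<rho> t)) \<le> p0"
      unfolding D_a_def elem00_def elem11_def f_def by auto
  qed
qed

end
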